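(* Let $m\in\mathbb{N}$ with $m\ge1$. If $m\not\equiv 6\pmod{12}$, then the friendship graph $F_j$ is $\mathbb{Z}_m$-cordial for all $0\le j\le\lfloor m/3\rfloor$. If $m\equiv 6\pmod{12}$, then $F_j$ is $\mathbb{Z}_m$-cordial for all $0\le j\le\lfloor m/3\rfloor-1$.
   Context: Graphs are finite, simple and undirected. For $n\in\mathbb{N}$, the friendship graph $F_n$ is the union of $n$ copies of the triangle $C_3$ joined at a single common (central) vertex. For an abelian group $A$ and a graph $G=(V,E)$, a vertex labeling $\ell:V\to A$ induces an edge labeling $\ell(\{v_1,v_2\})=\ell(v_1)+\ell(v_2)$. Let $f_V(a)=|\{v\in V:\ell(v)=a\}|$ and $f_E(a)=|\{e\in E:\ell(e)=a\}|$. The labeling is $A$-cordial if $|f_V(a_1)-f_V(a_2)|\le 1$ and $|f_E(a_1)-f_E(a_2)|\le 1$ for all $a_1,a_2\in A$; $G$ is $A$-cordial if it admits an $A$-cordial labeling. *)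

theory Defs
  imports Main
begin

text \<open>A finite simple graph is given by a vertex set V and an edge set E of
  two-element subsets of V.  The cyclic group Z_m is represented by the
  residues {0..<m} with addition modulo m.\<close>

definition simple_graph :: "'v set \<Rightarrow> 'v set set \<Rightarrow> bool" where
  "simple_graph V E \<longleftrightarrow> finite V \<and> (\<forall>e\<in>E. e \<subseteq> V \<and> card e = 2)"

definition edge_label :: "nat \<Rightarrow> ('v \<Rightarrow> nat) \<Rightarrow> 'v set \<Rightarrow> nat" where
  "edge_label m l e = (\<Sum>v\<in>e. l v) mod m"

definition vcount :: "'v set \<Rightarrow> ('v \<Rightarrow> nat) \<Rightarrow> nat \<Rightarrow> nat" where
  "vcount V l a = card {v\<in>V. l v = a}"

definition ecount :: "nat \<Rightarrow> 'v set set \<Rightarrow> ('v \<Rightarrow> nat) \<Rightarrow> nat \<Rightarrow> nat" where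
  "ecount m E l a = card {e\<in>E. edge_label m l e = a}"

definition Zm_cordial_labeling :: "nat \<Rightarrow> 'v set \<Rightarrow> 'v set set \<Rightarrow> ('v \<Rightarrow> nat) \<Rightarrow> bool" where
  "Zm_cordial_labeling m V E l \<longleftrightarrow>
     (\<forall>v\<in>V. l v < m) \<and>
     (\<forall>a1<m. \<forall>a2<m. vcount V l a1 \<le> vcount V l a2 + 1) \<and>
     (\<forall>a1<m. \<forall>a2<m. ecount m E l a1 \<le> ecount m E l a2 + 1)"

definition Zm_cordial :: "nat \<Rightarrow> 'v set \<Rightarrow> 'v set set \<Rightarrow> bool" where
  "Zm_cordial m V E \<longleftrightarrow> (\<exists>l. Zm_cordial_labeling m V E l)"

definition friendship_V :: "nat \<Rightarrow> nat set" where
  "friendship_V n = {0..2*n}"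

definition friendship_E :: "nat \<Rightarrow> nat set set" where
  "friendship_E n = (\<Union>i\<in>{1..n}. {{0, 2*i-1}, {0, 2*i}, {2*i-1, 2*i}})"

end

theory Submission
  imports Defs
begin

definition lab :: "(nat \<Rightarrow> nat) \<Rightarrow> (nat \<Rightarrow> nat) \<Rightarrow> nat \<Rightarrow> nat" where
  "lab X Y v = (if v = 0 then 0 else if odd v then X ((v+1) div 2) else Y (v div 2))"

definition trip :: "nat \<Rightarrow> (nat \<Rightarrow> nat) \<Rightarrow> (nat \<Rightarrow> nat) \<Rightarrow> nat \<times> nat \<Rightarrow> nat" where
  "trip m X Y p = (if snd p = 0 then X (fst p) else if snd p = 1 then Y (fst p)
     else (X (fst p) + Y (fst p)) mod m)"

definition tedge :: "nat \<times> nat \<Rightarrow> nat set" where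
  "tedge p = (if snd p = 0 then {0, 2 * fst p - 1} else if snd p = 1 then {0, 2 * fst p}
     else {2 * fst p - 1, 2 * fst p})"

lemma card_le1_inj:
  assumes "inj_on f A" "finite A"
  shows "card {v\<in>A. f v = a} \<le> 1"
proof -
  have "\<forall>x\<in>{v\<in>A. f v = a}. \<forall>y\<in>{v\<in>A. f v = a}. x = y"
    using assms(1) by (auto simp: inj_on_def)
  then show ?thesis using assms(2) by (simp add: card_le_Suc0_iff_eq)
qed

lemma E_image: "friendship_E j = tedge ` ({1..j} \<times> {0,1,2})"
proof -
  have a: "\<And>i. tedge ` ({i} \<times> {0,1,2}) = {{0,2*i-1},{0,2*i},{2*i-1,2*i}}"
    by (simp add: tedge_def insert_commute)
  have b: "{1..j} \<times> {(0::nat),1,2} = (\<Union>i\<in>{1..j}. {i} \<times> {0,1,2})" by auto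
  show ?thesis unfolding friendship_E_def b image_UN a by simp
qed

lemma elab:
  assumes rng: "\<forall>i\<in>{1..j}. 0 < X i \<and> X i < m \<and> 0 < Y i \<and> Y i < m"
  and p: "p \<in> {1..j} \<times> {(0::nat),1,2}"
  shows "edge_label m (lab X Y) (tedge p) = trip m X Y p"
  proof -
    obtain i c where pc: "p = (i,c)" by fastforce
    have i: "1 \<le> i" "i \<le> j" and c: "c = 0 \<or> c = 1 \<or> c = 2" using p pc by auto
    have o1: "odd (2*i - 1)" using i by presburger
    have d1: "(2*i-1+1) div 2 = i" using i by simp
    have X: "lab X Y (2*i-1) = X i" using o1 d1 i by (simp add: lab_def)
    have Y: "lab X Y (2*i) = Y i" using i by (simp add: lab_def)
    have n1: "2*i-1 \<noteq> 2*i" "0 \<noteq> 2*i-1" "0 \<noteq> 2*i" using i by auto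
    have "X i < m" "Y i < m" using rng i by auto
    then show ?thesis
      using c i X Y n1 unfolding pc edge_label_def tedge_def trip_def
      by (auto simp: lab_def)
  qed
lemma vinj:
  assumes rng: "\<forall>i\<in>{1..j}. 0 < X i \<and> X i < m \<and> 0 < Y i \<and> Y i < m"
  and Xinj: "\<And>i i'. i \<in> {1..j} \<Longrightarrow> i' \<in> {1..j} \<Longrightarrow> X i = X i' \<Longrightarrow> i = i'"
  and Yinj: "\<And>i i'. i \<in> {1..j} \<Longrightarrow> i' \<in> {1..j} \<Longrightarrow> Y i = Y i' \<Longrightarrow> i = i'"
  and XY: "\<And>i i'. i \<in> {1..j} \<Longrightarrow> i' \<in> {1..j} \<Longrightarrow> X i \<noteq> Y i'"
  shows "inj_on (lab X Y) (friendship_V j)"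
proof (rule inj_onI)
  fix u v assume u: "u \<in> friendship_V j" and v: "v \<in> friendship_V j" and e: "lab X Y u = lab X Y v"
  have ur: "u \<noteq> 0 \<Longrightarrow> (u+1) div 2 \<in> {1..j} \<and> (odd u \<or> u div 2 \<in> {1..j})"
    using u by (auto simp: friendship_V_def)
  have vr: "v \<noteq> 0 \<Longrightarrow> (v+1) div 2 \<in> {1..j} \<and> (odd v \<or> v div 2 \<in> {1..j})"
    using v by (auto simp: friendship_V_def)
  have posv: "\<And>w. w \<in> friendship_V j \<Longrightarrow> w \<noteq> 0 \<Longrightarrow> 0 < lab X Y w"
  proof -
    fix w assume w: "w \<in> friendship_V j" "w \<noteq> 0"
    then have "(w+1) div 2 \<in> {1..j}" "odd w \<or> w div 2 \<in> {1..j}"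
      by (auto simp: friendship_V_def)
    then show "0 < lab X Y w" using rng w by (auto simp: lab_def)
  qed
  show "u = v"
  proof (cases "u = 0")
    case True
    show ?thesis
    proof (rule ccontr)
      assume "u \<noteq> v" then have "v \<noteq> 0" using True by simp
      then have "0 < lab X Y v" using posv[OF v] by simp
      then show False using e True by (simp add: lab_def)
    qed
  next
    case uF: False
    show ?thesis
    proof (cases "v = 0")
      case True
      show ?thesis
      proof (rule ccontr)
        have "0 < lab X Y u" using posv[OF u] uF by simp
        then show False using e True by (simp add: lab_def)
      qed
    next
      case vF: False
      show ?thesis
      proof (cases "odd u")
        case uo: True
        show ?thesis
        proof (cases "odd v")
          case True
          then have "(u+1) div 2 = (v+1) div 2" using Xinj[of "(u+1) div 2" "(v+1) div 2"] uo e ur vr uF vF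
            by (simp add: lab_def)
          then show ?thesis using uo True by presburger
        next
          case False
          then show ?thesis using XY[of "(u+1) div 2" "v div 2"] uo e ur vr uF vF by (simp add: lab_def)
        qed
      next
        case ue: False
        show ?thesis
        proof (cases "odd v")
          case True
          then show ?thesis using XY[of "(v+1) div 2" "u div 2"] ue e ur vr uF vF by (simp add: lab_def)
        next
          case False
          then have "u div 2 = v div 2" using Yinj[of "u div 2" "v div 2"] ue e ur vr uF vF
            by (simp add: lab_def)
          then show ?thesis using ue False by presburger
        qed
      qed
    qed
  qed
qed

lemma generic:
  assumes rng: "\<forall>i\<in>{1..j}. 0 < X i \<and> X i < m \<and> 0 < Y i \<and> Y i < m"
  and inj: "inj_on (trip m X Y) ({1..j} \<times> {0,1,2})"
  and m0: "0 < m"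
  shows "Zm_cordial m (friendship_V j) (friendship_E j)"
proof -
  let ?l = "lab X Y"
  let ?I = "{1..j} \<times> {(0::nat),1,2}"
  have lt: "\<forall>v\<in>friendship_V j. ?l v < m"
  proof
    fix v assume v: "v \<in> friendship_V j"
    show "?l v < m"
    proof (cases "v = 0")
      case True then show ?thesis using m0 by (simp add: lab_def)
    next
      case False
      then have "(v+1) div 2 \<in> {1..j}" "odd v \<or> v div 2 \<in> {1..j}" using v
        by (auto simp: friendship_V_def)
      then show ?thesis using rng False by (auto simp: lab_def)
    qed
  qed
  have Xinj: "\<And>i i'. i \<in> {1..j} \<Longrightarrow> i' \<in> {1..j} \<Longrightarrow> X i = X i' \<Longrightarrow> i = i'"
  proof -
    fix i i' assume a: "i \<in> {1..j}" "i' \<in> {1..j}" "X i = X i'"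
    have m1: "(i,0) \<in> ?I" and m2: "(i',0) \<in> ?I" using a by auto
    have eq: "trip m X Y (i,0) = trip m X Y (i',0)" using a by (simp add: trip_def)
    have "(i,0::nat) = (i',0)" by (rule inj_onD[OF inj eq m1 m2])
    then show "i = i'" by simp
  qed
  have Yinj: "\<And>i i'. i \<in> {1..j} \<Longrightarrow> i' \<in> {1..j} \<Longrightarrow> Y i = Y i' \<Longrightarrow> i = i'"
  proof -
    fix i i' assume a: "i \<in> {1..j}" "i' \<in> {1..j}" "Y i = Y i'"
    have m1: "(i,1) \<in> ?I" and m2: "(i',1) \<in> ?I" using a by auto
    have eq: "trip m X Y (i,1) = trip m X Y (i',1)" using a by (simp add: trip_def)
    have "(i,1::nat) = (i',1)" by (rule inj_onD[OF inj eq m1 m2])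
    then show "i = i'" by simp
  qed
  have XY: "\<And>i i'. i \<in> {1..j} \<Longrightarrow> i' \<in> {1..j} \<Longrightarrow> X i \<noteq> Y i'"
  proof
    fix i i' assume a: "i \<in> {1..j}" "i' \<in> {1..j}" "X i = Y i'"
    have m1: "(i,0) \<in> ?I" and m2: "(i',1) \<in> ?I" using a by auto
    have eq: "trip m X Y (i,0) = trip m X Y (i',1)" using a by (simp add: trip_def)
    have "(i,0::nat) = (i',1)" by (rule inj_onD[OF inj eq m1 m2])
    then show False by simp
  qed
  have vi: "inj_on ?l (friendship_V j)" by (rule vinj[OF rng Xinj Yinj XY])
  have einj: "inj_on (edge_label m ?l) (friendship_E j)"
  proof -
    have "inj_on (edge_label m ?l \<circ> tedge) ?I"
    proof (rule inj_onI)
      fix p q assume p: "p \<in> ?I" and q: "q \<in> ?I" and e: "(edge_label m ?l \<circ> tedge) p = (edge_label m ?l \<circ> tedge) q"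
      have "trip m X Y p = trip m X Y q" using e elab[OF rng p] elab[OF rng q] by simp
      then show "p = q" using inj_onD[OF inj _ p q] by blast
    qed
    then show ?thesis unfolding E_image by (rule inj_on_imageI)
  qed
  have finE: "finite (friendship_E j)" unfolding E_image by simp
  have finV: "finite (friendship_V j)" by (simp add: friendship_V_def)
  have c1: "\<And>a. vcount (friendship_V j) ?l a \<le> 1"
    unfolding vcount_def using card_le1_inj[OF vi finV] .
  have c2: "\<And>a. ecount m (friendship_E j) ?l a \<le> 1"
    unfolding ecount_def using card_le1_inj[OF einj finE] .
  have "Zm_cordial_labeling m (friendship_V j) (friendship_E j) ?l"
    unfolding Zm_cordial_labeling_def
  proof (intro conjI allI impI)
    show "\<forall>v\<in>friendship_V j. ?l v < m" by (rule lt)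
  next
    fix a1 a2 :: nat
    show "vcount (friendship_V j) ?l a1 \<le> vcount (friendship_V j) ?l a2 + 1"
      using c1[of a1] by linarith
    show "ecount m (friendship_E j) ?l a1 \<le> ecount m (friendship_E j) ?l a2 + 1"
      using c2[of a1] by linarith
  qed
  then show ?thesis unfolding Zm_cordial_def by blast
qed

lemma tri_inj:
  assumes c: "c \<in> {0::nat,1,2}" and c': "c' \<in> {0::nat,1,2}"
  and eq: "(if c = 0 then x else if c = 1 then y else z) = (if c' = 0 then x' else if c' = 1 then y' else z')"
  and r: "x \<in> A" "x' \<in> A" "y \<in> B" "y' \<in> B" "z \<in> C" "z' \<in> C"
  and d: "A \<inter> B = {}" "A \<inter> C = {}" "B \<inter> C = {}"
  and i: "x = x' \<Longrightarrow> P" "y = y' \<Longrightarrow> P" "z = z' \<Longrightarrow> P"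
  shows "P \<and> c = c'"
  using c c' eq r d i by (auto split: if_splits)


lemma tri_inj2:
  assumes c: "c \<in> {0::nat,1,2}" and c': "c' \<in> {0::nat,1,2}"
  and eq: "(if c = 0 then x else if c = 1 then y else z) = (if c' = 0 then x' else if c' = 1 then y' else z')"
  and d: "x \<noteq> y'" "y \<noteq> x'" "x \<noteq> z'" "z \<noteq> x'" "y \<noteq> z'" "z \<noteq> y'"
  and i: "x = x' \<Longrightarrow> P" "y = y' \<Longrightarrow> P" "z = z' \<Longrightarrow> P"
  shows "P \<and> c = c'"
  using c c' eq d i by (auto split: if_splits)

definition piAB :: "nat \<Rightarrow> nat \<Rightarrow> nat \<Rightarrow> nat" where
  "piAB g e t = (if t \<le> g then 2*g - 2*t else 4*g+1+2*e-2*t)"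

lemma piAB_lt: "e \<le> 1 \<Longrightarrow> t < 2*g+1+e \<Longrightarrow> piAB g e t < 2*g+1+e"
  unfolding piAB_def by (cases "t \<le> g"; simp; linarith)

lemma piAB_inj: "e \<le> 1 \<Longrightarrow> t < 2*g+1+e \<Longrightarrow> t' < 2*g+1+e \<Longrightarrow> piAB g e t = piAB g e t' \<Longrightarrow> t = t'"
proof (cases "t \<le> g"; cases "t' \<le> g")
  assume "e \<le> 1" "t < 2*g+1+e" "t' < 2*g+1+e" "piAB g e t = piAB g e t'"
  {assume "t \<le> g" "t' \<le> g" then show "t = t'" using \<open>piAB g e t = piAB g e t'\<close> unfolding piAB_def by simp}
  {assume "\<not> t \<le> g" "\<not> t' \<le> g" then show "t = t'" using \<open>piAB g e t = piAB g e t'\<close> \<open>t < 2*g+1+e\<close> \<open>t' < 2*g+1+e\<close> \<open>e \<le> 1\<close> unfolding piAB_def by simp}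
  {assume a: "t \<le> g" "\<not> t' \<le> g"
   then have "2*g - 2*t = 4*g+1+2*e-2*t'" using \<open>piAB g e t = piAB g e t'\<close> unfolding piAB_def by simp
   then show "t = t'" using a \<open>t' < 2*g+1+e\<close> \<open>e \<le> 1\<close> by presburger}
  {assume a: "\<not> t \<le> g" "t' \<le> g"
   then have "2*g - 2*t' = 4*g+1+2*e-2*t" using \<open>piAB g e t = piAB g e t'\<close> unfolding piAB_def by simp
   then show "t = t'" using a \<open>t < 2*g+1+e\<close> \<open>e \<le> 1\<close> by presburger}
qed

lemma piAB_sum_inj: "e \<le> 1 \<Longrightarrow> t < 2*g+1+e \<Longrightarrow> t' < 2*g+1+e \<Longrightarrow> t + piAB g e t = t' + piAB g e t' \<Longrightarrow> t = t'"
  unfolding piAB_def by (simp split: if_splits)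

lemma piAB_sum_rng: "e \<le> 1 \<Longrightarrow> t < 2*g+1+e \<Longrightarrow> g \<le> t + piAB g e t \<and> t + piAB g e t \<le> 3*g + 2*e"
  unfolding piAB_def by (cases "t \<le> g"; simp; linarith)

lemma mod_eq_close:
  fixes a b m :: nat
  assumes "a mod m = b mod m" "a \<le> b" "b < a + m"
  shows "a = b"
proof -
  have "m dvd b - a" using mod_eq_dvd_iff_nat[of a b m] assms(1,2) by simp
  show ?thesis
  proof (rule ccontr)
    assume "a \<noteq> b"
    then have "0 < b - a" using assms(2) by simp
    then have "m \<le> b - a" using \<open>m dvd b - a\<close> by (simp add: dvd_imp_le)
    then show False using assms(2,3) by linarith
  qed
qed

lemma mod_two_range:
  fixes s m :: nat
  assumes "s < 2*m"
  shows "(s < m \<and> s mod m = s) \<or> (m \<le> s \<and> s mod m = s - m)"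
proof (cases "s < m")
  case True then show ?thesis by simp
next
  case False
  then have "s mod m = (s - m) mod m" using le_mod_geq[of m s] by simp
  also have "\<dots> = s - m" using assms False by simp
  finally show ?thesis using False by simp
qed

lemma cordAB:
  assumes e: "e \<le> 1" and j: "j = 2*g+1+e" and m: "3*j + e \<le> m"
  shows "Zm_cordial m (friendship_V j) (friendship_E j)"
proof -
  define X where "X = (\<lambda>i::nat. g+e+i)"
  define Y where "Y = (\<lambda>i::nat. 3*g+2+2*e + piAB g e (i-1))"
  define S where "S = (\<lambda>i::nat. X i + Y i)"
  have Xr: "\<And>i. i \<in> {1..j} \<Longrightarrow> g+1+e \<le> X i \<and> X i \<le> 3*g+1+2*e"
    unfolding X_def using j by auto
  have Yr: "\<And>i. i \<in> {1..j} \<Longrightarrow> 3*g+2+2*e \<le> Y i \<and> Y i \<le> 5*g+2+3*e"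
  proof -
    fix i assume i: "i \<in> {1..j}"
    have "piAB g e (i-1) < 2*g+1+e" using piAB_lt[OF e, of "i-1" g] i j by auto
    then show "3*g+2+2*e \<le> Y i \<and> Y i \<le> 5*g+2+3*e" unfolding Y_def by simp
  qed
  have Sr: "\<And>i. i \<in> {1..j} \<Longrightarrow> 5*g+3+3*e \<le> S i \<and> S i \<le> 7*g+3+5*e"
  proof -
    fix i assume i: "i \<in> {1..j}"
    have "g \<le> (i-1) + piAB g e (i-1) \<and> (i-1) + piAB g e (i-1) \<le> 3*g + 2*e"
      using piAB_sum_rng[OF e, of "i-1" g] i j by auto
    then show "5*g+3+3*e \<le> S i \<and> S i \<le> 7*g+3+5*e" unfolding S_def X_def Y_def using i by auto
  qed
  have Yinj: "\<And>i i'. i \<in> {1..j} \<Longrightarrow> i' \<in> {1..j} \<Longrightarrow> Y i = Y i' \<Longrightarrow> i = i'"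
  proof -
    fix i i' assume i: "i \<in> {1..j}" and i': "i' \<in> {1..j}" and eq: "Y i = Y i'"
    have "piAB g e (i-1) = piAB g e (i'-1)" using eq unfolding Y_def by simp
    then have "i - 1 = i' - 1" using piAB_inj[OF e, of "i-1" g "i'-1"] i i' j by auto
    then show "i = i'" using i i' by auto
  qed
  have Sinj: "\<And>i i'. i \<in> {1..j} \<Longrightarrow> i' \<in> {1..j} \<Longrightarrow> S i = S i' \<Longrightarrow> i = i'"
  proof -
    fix i i' assume i: "i \<in> {1..j}" and i': "i' \<in> {1..j}" and eq: "S i = S i'"
    have "(i-1) + piAB g e (i-1) = (i'-1) + piAB g e (i'-1)" using eq i i' unfolding S_def X_def Y_def by auto
    then have "i - 1 = i' - 1" using piAB_sum_inj[OF e, of "i-1" g "i'-1"] i i' j by auto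
    then show "i = i'" using i i' by auto
  qed
  have Rr: "\<And>i. i \<in> {1..j} \<Longrightarrow> S i mod m \<le> g+e \<or> 5*g+3+3*e \<le> S i mod m"
  proof -
    fix i assume i: "i \<in> {1..j}"
    have "S i < 2*m" using Sr[OF i] j m by simp
    then show "S i mod m \<le> g+e \<or> 5*g+3+3*e \<le> S i mod m"
      using mod_two_range[of "S i" m] Sr[OF i] j m by auto
  qed
  have Rinj: "\<And>i i'. i \<in> {1..j} \<Longrightarrow> i' \<in> {1..j} \<Longrightarrow> S i mod m = S i' mod m \<Longrightarrow> i = i'"
  proof -
    fix i i' assume i: "i \<in> {1..j}" and i': "i' \<in> {1..j}" and eq: "S i mod m = S i' mod m"
    have "S i = S i'"
    proof (cases "S i \<le> S i'")
      case True
      then show ?thesis using mod_eq_close[OF eq True] Sr[OF i] Sr[OF i'] j m by simp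
    next
      case False
      then show ?thesis using mod_eq_close[OF eq[symmetric]] Sr[OF i] Sr[OF i'] j m by simp
    qed
    then show "i = i'" using Sinj i i' by blast
  qed
  have rng: "\<forall>i\<in>{1..j}. 0 < X i \<and> X i < m \<and> 0 < Y i \<and> Y i < m"
    using Xr Yr j m by fastforce
  have inj: "inj_on (trip m X Y) ({1..j} \<times> {0,1,2})"
  proof (rule inj_onI)
    fix p q assume p: "p \<in> {1..j} \<times> {(0::nat),1,2}" and q: "q \<in> {1..j} \<times> {(0::nat),1,2}"
      and eq: "trip m X Y p = trip m X Y q"
    obtain i c where pc: "p = (i,c)" by fastforce
    obtain i' c' where qc: "q = (i',c')" by fastforce
    have i: "i \<in> {1..j}" and c: "c = 0 \<or> c = 1 \<or> c = 2" using p pc by auto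
    have i': "i' \<in> {1..j}" and c': "c' = 0 \<or> c' = 1 \<or> c' = 2" using q qc by auto
    have eq2: "trip m X Y (i,c) = trip m X Y (i',c')" using eq pc qc by simp
    have XX: "X i = X i' \<Longrightarrow> i = i'" unfolding X_def by simp
    have e2: "(if c = 0 then X i else if c = 1 then Y i else S i mod m) =
      (if c' = 0 then X i' else if c' = 1 then Y i' else S i' mod m)"
    proof -
      have t: "\<And>k d. trip m X Y (k,d) = (if d = 0 then X k else if d = 1 then Y k else S k mod m)"
        by (simp add: trip_def S_def)
      show ?thesis using eq2 unfolding t .
    qed
    let ?A = "{g+1+e..3*g+1+2*e}" let ?B = "{3*g+2+2*e..5*g+2+3*e}"
    let ?C = "{..g+e} \<union> {5*g+3+3*e..}"
    have r: "X i \<in> ?A" "X i' \<in> ?A" "Y i \<in> ?B" "Y i' \<in> ?B" "S i mod m \<in> ?C" "S i' mod m \<in> ?C"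
      using Xr[OF i] Xr[OF i'] Yr[OF i] Yr[OF i'] Rr[OF i] Rr[OF i'] by auto
    have d: "?A \<inter> ?B = {}" "?A \<inter> ?C = {}" "?B \<inter> ?C = {}" by auto
    have "i = i' \<and> c = c'"
      by (rule tri_inj[OF _ _ e2 r d XX Yinj[OF i i'] Rinj[OF i i']]) (use c c' in auto)
    then show "p = q" using pc qc by simp
  qed
  have m0: "0 < m" using m j by simp
  show ?thesis by (rule generic[OF rng inj m0])
qed

definition skA :: "nat \<Rightarrow> nat \<Rightarrow> nat" where
  "skA s i = (if i \<le> 2*s then 4*s+i-1 else if i \<le> 3*s-2 then i-2*s else if i \<le> 4*s-4 then i+3-2*s
     else if i = 4*s-3 then s-1 else if i = 4*s-2 then s else if i = 4*s-1 then 2*s else 2*s+1)"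

definition skB :: "nat \<Rightarrow> nat \<Rightarrow> nat" where
  "skB s i = (if i \<le> 2*s then 8*s+1-i else if i \<le> 3*s-2 then 6*s-1-i else if i \<le> 4*s-4 then 6*s-2-i
     else if i = 4*s-3 then 3*s else if i = 4*s-2 then s+1 else if i = 4*s-1 then 4*s-1 else 6*s)"

lemma sk_piece:
  assumes s: "2 \<le> s" and i: "1 \<le> i" "i \<le> 4*s"
  shows "(i \<le> 2*s \<and> skA s i + 1 = 4*s + i \<and> skB s i + i = 8*s + 1)
    \<or> (2*s < i \<and> i + 2 \<le> 3*s \<and> skA s i + 2*s = i \<and> skB s i + i + 1 = 6*s)
    \<or> (3*s < i + 2 \<and> i + 4 \<le> 4*s \<and> skA s i + 2*s = i + 3 \<and> skB s i + i + 2 = 6*s)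
    \<or> (i + 3 = 4*s \<and> skA s i + 1 = s \<and> skB s i = 3*s)
    \<or> (i + 2 = 4*s \<and> skA s i = s \<and> skB s i = s + 1)
    \<or> (i + 1 = 4*s \<and> skA s i = 2*s \<and> skB s i + 1 = 4*s)
    \<or> (i = 4*s \<and> skA s i = 2*s + 1 \<and> skB s i = 6*s)"
proof (cases "i \<le> 2*s")
  case True then show ?thesis using s i by (simp add: skA_def skB_def)
next
  case c1: False
  show ?thesis
  proof (cases "i \<le> 3*s-2")
    case True
    have "i + 2 \<le> 3*s" "2*s < i" using True c1 s by linarith+
    then show ?thesis using s i c1 True by (simp add: skA_def skB_def)
  next
    case c2: False
    show ?thesis
    proof (cases "i \<le> 4*s-4")
      case True
      have "i + 4 \<le> 4*s" "3*s < i + 2" using True c2 s by linarith+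
      then show ?thesis using s i c1 c2 True by (simp add: skA_def skB_def)
    next
      case c3: False
      then have "i = 4*s-3 \<or> i = 4*s-2 \<or> i = 4*s-1 \<or> i = 4*s" using i s by linarith
      then show ?thesis using s i c1 c2 c3 by (elim disjE; simp add: skA_def skB_def; linarith)
    qed
  qed
qed


definition skP :: "nat \<Rightarrow> nat \<Rightarrow> nat \<Rightarrow> nat \<Rightarrow> bool" where
  "skP s i a b \<longleftrightarrow> (i \<le> 2*s \<and> a + 1 = 4*s + i \<and> b + i = 8*s + 1)
    \<or> (2*s < i \<and> i + 2 \<le> 3*s \<and> a + 2*s = i \<and> b + i + 1 = 6*s)
    \<or> (3*s < i + 2 \<and> i + 4 \<le> 4*s \<and> a + 2*s = i + 3 \<and> b + i + 2 = 6*s)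
    \<or> (i + 3 = 4*s \<and> a + 1 = s \<and> b = 3*s)
    \<or> (i + 2 = 4*s \<and> a = s \<and> b = s + 1)
    \<or> (i + 1 = 4*s \<and> a = 2*s \<and> b + 1 = 4*s)
    \<or> (i = 4*s \<and> a = 2*s + 1 \<and> b = 6*s)"


lemma skP_ok: "2 \<le> s \<Longrightarrow> 1 \<le> i \<Longrightarrow> i \<le> 4*s \<Longrightarrow> skP s i (skA s i) (skB s i)"
  unfolding skP_def by (rule sk_piece)

lemma skP_rng: "2 \<le> s \<Longrightarrow> 1 \<le> i \<Longrightarrow> skP s i a b \<Longrightarrow> 1 \<le> a \<and> a < b \<and> b \<le> 8*s \<and> b \<le> a + 4*s"
  unfolding skP_def by (elim disjE conjE; linarith)

lemma skP_Ainj: "2 \<le> s \<Longrightarrow> skP s i a b \<Longrightarrow> skP s i' a' b' \<Longrightarrow> a = a' \<Longrightarrow> i = i'"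
  unfolding skP_def by (elim disjE conjE; linarith)

lemma skP_Binj: "2 \<le> s \<Longrightarrow> skP s i a b \<Longrightarrow> skP s i' a' b' \<Longrightarrow> b = b' \<Longrightarrow> i = i'"
  unfolding skP_def by (elim disjE conjE; linarith)

lemma skP_AB: "2 \<le> s \<Longrightarrow> 1 \<le> i \<Longrightarrow> 1 \<le> i' \<Longrightarrow> skP s i a b \<Longrightarrow> skP s i' a' b' \<Longrightarrow> a = b' \<Longrightarrow> False"
  unfolding skP_def by (elim disjE conjE; linarith)

lemma skP_even: "2 \<le> s \<Longrightarrow> i \<le> 2*s \<Longrightarrow> skP s i a b \<Longrightarrow> b + 2*i = a + 4*s + 2"
  unfolding skP_def by (elim disjE conjE; linarith)

lemma skP_dinj_lo: "2 \<le> s \<Longrightarrow> i \<le> 2*s \<Longrightarrow> i' \<le> 2*s \<Longrightarrow> skP s i a b \<Longrightarrow> skP s i' a' b' \<Longrightarrow> b - a = b' - a' \<Longrightarrow> i = i'"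
  unfolding skP_def by (elim disjE conjE; linarith)

lemma skP_dinj_hi: "2 \<le> s \<Longrightarrow> 2*s < i \<Longrightarrow> 2*s < i' \<Longrightarrow> skP s i a b \<Longrightarrow> skP s i' a' b' \<Longrightarrow> b - a = b' - a' \<Longrightarrow> i = i'"
  unfolding skP_def by (elim disjE conjE; linarith)

lemma oa1: "(b::nat) + 2*i + 1 = a + 8*s \<Longrightarrow> a \<le> b \<Longrightarrow> odd (b - a)"
proof -
  assume h: "b + 2*i + 1 = a + 8*s" "a \<le> b"
  then have "b - a = 2*(4*s - i - 1) + 1" by linarith
  then show ?thesis by simp
qed
lemma oa2: "(b::nat) + 2*i + 5 = a + 8*s \<Longrightarrow> a \<le> b \<Longrightarrow> odd (b - a)"
proof -
  assume h: "b + 2*i + 5 = a + 8*s" "a \<le> b"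
  then have "b - a = 2*(4*s - i - 3) + 1" by linarith
  then show ?thesis by simp
qed
lemma oa5: "(b::nat) + 1 = a + 2*s \<Longrightarrow> 0 < s \<Longrightarrow> odd (b - a)"
proof -
  assume h: "b + 1 = a + 2*s" "0 < s"
  then have "b - a = 2*(s - 1) + 1" by linarith
  then show ?thesis by simp
qed
lemma oa6: "(b::nat) + 1 = a + 4*s \<Longrightarrow> 0 < s \<Longrightarrow> odd (b - a)"
proof -
  assume h: "b + 1 = a + 4*s" "0 < s"
  then have "b - a = 2*(2*s - 1) + 1" by linarith
  then show ?thesis by simp
qed
lemma oa3: "(b::nat) = a + 2*s + 1 \<Longrightarrow> odd (b - a)" by simp
lemma oa4: "(b::nat) = a + 1 \<Longrightarrow> odd (b - a)" by simp
lemma ea: "(b::nat) + 2*i = a + 4*s + 2 \<Longrightarrow> even (b - a)"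
proof -
  assume h: "b + 2*i = a + 4*s + 2"
  then have "b - a = 2*(2*s + 1 - i)" by linarith
  then show ?thesis by simp
qed
lemma skP_odd: "2 \<le> s \<Longrightarrow> 2*s < i \<Longrightarrow> skP s i a b \<Longrightarrow> odd (b - a)"
  unfolding skP_def
  apply (elim disjE conjE)
  apply linarith
  apply (rule oa1[of b i a s]; linarith)
  apply (rule oa2[of b i a s]; linarith)
  apply (rule oa3[of b a s]; linarith)
  apply (rule oa4[of b a]; linarith)
  apply (rule oa5[of b a s]; linarith)
  apply (rule oa6[of b a s]; linarith)
  done

lemma skP_dinj:
  assumes s: "2 \<le> s" and P: "skP s i a b" "skP s i' a' b'" and e: "b - a = b' - a'"
  shows "i = i'"
proof (cases "i \<le> 2*s")
  case T: True
  show ?thesis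
  proof (cases "i' \<le> 2*s")
    case True show ?thesis by (rule skP_dinj_lo[OF s T True P e])
  next
    case False
    have "even (b - a)" using ea skP_even[OF s T P(1)] by blast
    moreover have "odd (b' - a')" using skP_odd[OF s _ P(2)] False by simp
    ultimately show ?thesis using e by simp
  qed
next
  case F: False
  show ?thesis
  proof (cases "i' \<le> 2*s")
    case True
    have "even (b' - a')" using ea skP_even[OF s True P(2)] by blast
    moreover have "odd (b - a)" using skP_odd[OF s _ P(1)] F by simp
    ultimately show ?thesis using e by simp
  next
    case False then show ?thesis using skP_dinj_hi[OF s _ _ P e] F by simp
  qed
qed

lemma cordC:
  assumes s: "2 \<le> s"
  shows "Zm_cordial (12*s) (friendship_V (4*s)) (friendship_E (4*s))"
proof -
  define X where "X = (\<lambda>i. skB s i - skA s i)"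
  define Y where "Y = (\<lambda>i. skA s i + 4*s)"
  define Z where "Z = (\<lambda>i. if skB s i = 8*s then 0 else skB s i + 4*s)"
  have P: "\<And>i. i \<in> {1..4*s} \<Longrightarrow> skP s i (skA s i) (skB s i)" using skP_ok s by auto
  have R: "\<And>i. i \<in> {1..4*s} \<Longrightarrow> 1 \<le> skA s i \<and> skA s i < skB s i \<and> skB s i \<le> 8*s \<and> skB s i \<le> skA s i + 4*s"
    using skP_rng[OF s _ P] by auto
  have Zeq: "\<And>i. i \<in> {1..4*s} \<Longrightarrow> (X i + Y i) mod (12*s) = Z i"
  proof -
    fix i assume i: "i \<in> {1..4*s}"
    have xy: "X i + Y i = skB s i + 4*s" using R[OF i] unfolding X_def Y_def by simp
    show "(X i + Y i) mod (12*s) = Z i"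
    proof (cases "skB s i = 8*s")
      case True then show ?thesis using xy unfolding Z_def by simp
    next
      case False
      then have "skB s i + 4*s < 12*s" using R[OF i] by simp
      then show ?thesis using xy False unfolding Z_def by simp
    qed
  qed
  have rng: "\<forall>i\<in>{1..4*s}. 0 < X i \<and> X i < 12*s \<and> 0 < Y i \<and> Y i < 12*s"
    using R unfolding X_def Y_def by fastforce
  have inj: "inj_on (trip (12*s) X Y) ({1..4*s} \<times> {0,1,2})"
  proof (rule inj_onI)
    fix p q assume p: "p \<in> {1..4*s} \<times> {(0::nat),1,2}" and q: "q \<in> {1..4*s} \<times> {(0::nat),1,2}"
      and eq: "trip (12*s) X Y p = trip (12*s) X Y q"
    obtain i c where pc: "p = (i,c)" by fastforce
    obtain i' c' where qc: "q = (i',c')" by fastforce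
    have i: "i \<in> {1..4*s}" and c: "c \<in> {0,1,2}" using p pc by auto
    have i': "i' \<in> {1..4*s}" and c': "c' \<in> {0,1,2}" using q qc by auto
    have t: "\<And>k d. k \<in> {1..4*s} \<Longrightarrow> trip (12*s) X Y (k,d) = (if d = 0 then X k else if d = 1 then Y k else Z k)"
      using Zeq by (simp add: trip_def)
    have e2: "(if c = 0 then X i else if c = 1 then Y i else Z i) =
      (if c' = 0 then X i' else if c' = 1 then Y i' else Z i')"
      using eq unfolding pc qc t[OF i] t[OF i'] .
    note Ri = R[OF i] and Ri' = R[OF i']
    have XX: "X i = X i' \<Longrightarrow> i = i'" unfolding X_def by (rule skP_dinj[OF s P[OF i] P[OF i']])
    have YY: "Y i = Y i' \<Longrightarrow> i = i'" unfolding Y_def using skP_Ainj[OF s P[OF i] P[OF i']] by simp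
    have ZZ: "Z i = Z i' \<Longrightarrow> i = i'"
    proof -
      assume z: "Z i = Z i'"
      have "skB s i = skB s i'"
        using z unfolding Z_def by (simp split: if_splits)
      then show "i = i'" using skP_Binj[OF s P[OF i] P[OF i']] by simp
    qed
    have AB1: "skA s i \<noteq> skB s i'" using skP_AB[OF s _ _ P[OF i] P[OF i']] i i' by auto
    have AB2: "skA s i' \<noteq> skB s i" using skP_AB[OF s _ _ P[OF i'] P[OF i]] i i' by auto
    have d: "X i \<noteq> Y i'" "Y i \<noteq> X i'" "X i \<noteq> Z i'" "Z i \<noteq> X i'" "Y i \<noteq> Z i'" "Z i \<noteq> Y i'"
      using Ri Ri' AB1 AB2 unfolding X_def Y_def Z_def by auto
    have "i = i' \<and> c = c'" by (rule tri_inj2[OF c c' e2 d XX YY ZZ])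
    then show "p = q" using pc qc by simp
  qed
  have m0: "0 < 12*s" using s by simp
  show ?thesis by (rule generic[OF rng inj m0])
qed

lemma cord12: "Zm_cordial 12 (friendship_V 4) (friendship_E 4)"
proof -
  define X where "X = (\<lambda>i::nat. i)"
  define Y where "Y = (\<lambda>i::nat. if i = 1 then 5 else if i = 2 then 8 else if i = 3 then (9::nat) else 7)"
  have I4: "{1..4::nat} = {1,2,3,4}" by auto
  have rng: "\<forall>i\<in>{1..4}. 0 < X i \<and> X i < 12 \<and> 0 < Y i \<and> Y i < 12"
    unfolding I4 X_def Y_def by simp
  have I: "{1..4::nat} \<times> {0::nat,1,2} = {(1,0),(1,1),(1,2),(2,0),(2,1),(2,2),(3,0),(3,1),(3,2),(4,0),(4,1),(4,2)}"
    unfolding I4 by auto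
  have im: "trip 12 X Y ` ({1..4} \<times> {0,1,2}) = {6, 10, 0, 11, 7, 9, 8, 5, 1, 2, 3, 4}"
    unfolding I by (simp add: trip_def X_def Y_def)
  have c1: "card (trip 12 X Y ` ({1..4} \<times> {0,1,2})) = 12"
    unfolding im by simp
  have c2: "card ({1..4::nat} \<times> {0::nat,1,2}) = 12"
    unfolding I by simp
  have "card (trip 12 X Y ` ({1..4} \<times> {0,1,2})) = card ({1..4::nat} \<times> {0::nat,1,2})"
    using c1 c2 by simp
  then have inj: "inj_on (trip 12 X Y) ({1..4} \<times> {0,1,2})"
    by (simp add: inj_on_iff_eq_card)
  show ?thesis by (rule generic[OF rng inj]) simp
qed

lemma cord0: "0 < m \<Longrightarrow> Zm_cordial m (friendship_V 0) (friendship_E 0)"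
  by (rule generic[of 0 "\<lambda>i. 1" m "\<lambda>i. 1"]) auto

lemma main_lemma:
  assumes m: "1 \<le> m" and j: "j \<le> m div 3" and n6: "\<not> (3*j = m \<and> m mod 12 = 6)"
  shows "Zm_cordial m (friendship_V j) (friendship_E j)"
proof (cases "j = 0")
  case True then show ?thesis using cord0 m by simp
next
  case jpos: False
  have j3: "3*j \<le> m" using j by linarith
  show ?thesis
  proof (cases "odd j")
    case True
    define g where "g = j div 2"
    have g: "j = 2*g+1+0" unfolding g_def using True by simp
    show ?thesis by (rule cordAB[OF _ g]) (use j3 g in auto)
  next
    case False
    define g where "g = j div 2 - 1"
    have "j = 2 * (j div 2)" using False by simp
    then have g: "j = 2*g+1+1" unfolding g_def using jpos by linarith
    show ?thesis
    proof (cases "3*j + 1 \<le> m")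
      case True
      show ?thesis by (rule cordAB[OF _ g]) (use True g in auto)
    next
      case F: False
      then have mj: "m = 3*j" using j3 by simp
      then have "m mod 12 \<noteq> 6" using n6 by simp
      obtain s where s: "j = 4*s"
      proof (cases "even g")
        case True
        then obtain t where t: "g = 2*t" by blast
        then have "m = 12*t + 6" using mj g by simp
        then have "m mod 12 = 6" by simp
        then show ?thesis using \<open>m mod 12 \<noteq> 6\<close> by simp
      next
        case False
        then obtain t where t: "g = 2*t+1" using oddE by blast
        show ?thesis using that[of "t+1"] g t by simp
      qed
      show ?thesis
      proof (cases "s = 1")
        case True then show ?thesis using cord12 mj s by simp
      next
        case False
        then have "2 \<le> s" using s jpos by simp
        then show ?thesis using cordC mj s by simp
      qed
    qed
  qed
qed

theorem corollary9p5:
  fixes m :: nat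
  assumes "m \<ge> 1"
  shows "(m mod 12 \<noteq> 6 \<longrightarrow>
            (\<forall>j \<le> m div 3. Zm_cordial m (friendship_V j) (friendship_E j)))
       \<and> (m mod 12 = 6 \<longrightarrow>
            (\<forall>j \<le> m div 3 - 1. Zm_cordial m (friendship_V j) (friendship_E j)))"
proof (intro conjI impI allI)
  fix j assume "m mod 12 \<noteq> 6" "j \<le> m div 3"
  then show "Zm_cordial m (friendship_V j) (friendship_E j)" using main_lemma assms by simp
next
  fix j assume a: "m mod 12 = 6" "j \<le> m div 3 - 1"
  then have "j \<le> m div 3" "3*j \<noteq> m" by auto
  then show "Zm_cordial m (friendship_V j) (friendship_E j)" using main_lemma assms by simp
qed

end
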